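(* Under the hypotheses of Lemma 7 (heterogeneous agents $\dot x_i=\sum_j\alpha_{ij}(t)(\mathrm{sat}_j(x_j)-\mathrm{sat}_i(x_i))$ with $s_1>\dots>s_N>0$, time-varying undirected graph satisfying the standing assumptions, integrally connected over $[0,\infty)$, with $\alpha_{ij}(t)\in\{0\}\cup[\alpha_{\min},\alpha_{\max}]$, $0<\alpha_{\min}\le\alpha_{\max}$), for every $i\in\mathcal V$ there exists $x_i^*$ with $\lim_{t\to\infty}x_i(t)=x_i^*$, and $x_i^*\in[-s_N,s_N]$ for all $i\in\{1,\dots,N-1\}$.
   Context: $\mathrm{sat}_i(x)=\mathrm{sign}(x)\min\{|x|,s_i\}$. Standing assumptions: $\alpha_{ij}(t)=\alpha_{ji}(t)\ge0$, each $\alpha_{ij}$ continuous on $[0,\infty)$ except on a set of measure zero; Carathéodory solutions. Integral graph: adjacency $\bar\alpha_{ij}=1$ if $\int_0^\infty\alpha_{ij}(t)dt=\infty$, else $0$; integrally connected means this graph is connected. *)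

theory Defs
  imports "HOL-Analysis.Analysis"
begin

definition sat :: "real \<Rightarrow> real \<Rightarrow> real" where
  "sat s x = sgn x * min \<bar>x\<bar> s"

definition standing_weights :: "nat \<Rightarrow> (nat \<Rightarrow> nat \<Rightarrow> real \<Rightarrow> real) \<Rightarrow> bool" where
  "standing_weights N \<alpha> \<longleftrightarrow>
     (\<forall>i<N. \<forall>j<N. \<forall>t\<ge>0. \<alpha> i j t = \<alpha> j i t \<and> \<alpha> i j t \<ge> 0) \<and>
     (\<forall>i<N. \<forall>j<N. \<exists>S. S \<in> null_sets lebesgue \<and>
        (\<forall>t\<in>{0..} - S. continuous (at t within {0..}) (\<alpha> i j)))"

definition integral_edge :: "(nat \<Rightarrow> nat \<Rightarrow> real \<Rightarrow> real) \<Rightarrow> nat \<Rightarrow> nat \<Rightarrow> bool" where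
  "integral_edge \<alpha> i j \<longleftrightarrow> (\<integral>\<^sup>+ t\<in>{0..}. ennreal (\<alpha> i j t) \<partial>lebesgue) = \<infinity>"

definition integrally_connected :: "nat \<Rightarrow> (nat \<Rightarrow> nat \<Rightarrow> real \<Rightarrow> real) \<Rightarrow> bool" where
  "integrally_connected N \<alpha> \<longleftrightarrow>
     (\<forall>i<N. \<forall>j<N. (\<lambda>a b. a < N \<and> b < N \<and> integral_edge \<alpha> a b)\<^sup>*\<^sup>* i j)"

definition sat_rhs :: "nat \<Rightarrow> (nat \<Rightarrow> real) \<Rightarrow> (nat \<Rightarrow> nat \<Rightarrow> real \<Rightarrow> real)
    \<Rightarrow> (nat \<Rightarrow> real \<Rightarrow> real) \<Rightarrow> nat \<Rightarrow> real \<Rightarrow> real" where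
  "sat_rhs N s \<alpha> x i t = (\<Sum>j<N. \<alpha> i j t * (sat (s j) (x j t) - sat (s i) (x i t)))"

definition caratheodory_solution :: "nat \<Rightarrow> (nat \<Rightarrow> real) \<Rightarrow> (nat \<Rightarrow> nat \<Rightarrow> real \<Rightarrow> real)
    \<Rightarrow> (nat \<Rightarrow> real \<Rightarrow> real) \<Rightarrow> bool" where
  "caratheodory_solution N s \<alpha> x \<longleftrightarrow>
     (\<forall>i<N. \<forall>t\<ge>0. set_integrable lebesgue {0..t} (sat_rhs N s \<alpha> x i) \<and>
        x i t = x i 0 + (LINT \<tau>:{0..t}|lebesgue. sat_rhs N s \<alpha> x i \<tau>))"

end

theory Submission
  imports Defs
begin

lemma sat_clamp: "s > 0 \<Longrightarrow> sat s v = max (-s) (min v s)"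
  unfolding sat_def by (cases "v > 0"; cases "v = 0"; auto simp: sgn_if abs_if min_def max_def)

lemma sat_bound: "s > 0 \<Longrightarrow> \<bar>sat s v\<bar> \<le> s"
  by (simp add: sat_clamp)

lemma sat_mono: "s > 0 \<Longrightarrow> u \<le> v \<Longrightarrow> sat s u \<le> sat s v"
  by (simp add: sat_clamp)

lemma sat_lip: "s > 0 \<Longrightarrow> \<bar>sat s u - sat s v\<bar> \<le> \<bar>u - v\<bar>"
  by (simp add: sat_clamp abs_if min_def max_def)

lemma sat_neg: "s > 0 \<Longrightarrow> sat s (-v) = - sat s v"
  by (simp add: sat_clamp min_def max_def)

lemma sat_cont: "s > 0 \<Longrightarrow> continuous_on UNIV (sat s)"
proof -
  assume s: "s > 0"
  have "sat s = (\<lambda>v. max (-s) (min v s))" using sat_clamp[OF s] by auto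
  then show ?thesis by (simp add: continuous_intros)
qed


lemma term_bound:
  fixes A si sj vi vj wi wj amax B e :: real
  assumes "0 \<le> A" "A \<le> amax" "\<bar>si\<bar> \<le> B" "\<bar>sj\<bar> \<le> B" "(si - sj)*(vj - vi) \<le> 0"
    "\<bar>wi - vi\<bar> \<le> e" "\<bar>wj - vj\<bar> \<le> e"
  shows "A*((si-sj)*(wj-wi)) \<le> amax*(4*B*e)"
proof -
  have "(si-sj)*(wj-wi) = (si-sj)*(vj-vi) + (si-sj)*((wj-vj)-(wi-vi))" by (simp add: algebra_simps)
  also have "\<dots> \<le> \<bar>si-sj\<bar>*\<bar>(wj-vj)-(wi-vi)\<bar>"
  proof -
    have "(si-sj)*((wj-vj)-(wi-vi)) \<le> \<bar>(si-sj)*((wj-vj)-(wi-vi))\<bar>" by (rule abs_ge_self)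
    then have "(si-sj)*((wj-vj)-(wi-vi)) \<le> \<bar>si-sj\<bar>*\<bar>(wj-vj)-(wi-vi)\<bar>" by (simp only: abs_mult)
    then show ?thesis using assms(5) by linarith
  qed
  also have "\<dots> \<le> (2*B)*(2*e)"
  proof (rule mult_mono)
    show "\<bar>si-sj\<bar> \<le> 2*B" using assms(3,4) by linarith
    show "\<bar>(wj-vj)-(wi-vi)\<bar> \<le> 2*e" using assms(6,7) by linarith
    show "0 \<le> 2*B" using assms(3) by linarith
    show "0 \<le> \<bar>(wj-vj)-(wi-vi)\<bar>" by simp
  qed
  finally have X: "(si-sj)*(wj-wi) \<le> 4*B*e" by simp
  have "e \<ge> 0" "B \<ge> 0" using assms by auto
  then have "0 \<le> 4*B*e" by simp
  have "A*((si-sj)*(wj-wi)) \<le> A*(4*B*e)" using X assms(1) by (rule mult_left_mono)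
  also have "\<dots> \<le> amax*(4*B*e)" using assms(2) \<open>0 \<le> 4*B*e\<close> by (rule mult_right_mono)
  finally show ?thesis .
qed

lemma mono_sign:
  fixes h :: "real \<Rightarrow> real"
  assumes "mono h" shows "(h vi - h vj)*(vj - vi) \<le> 0"
proof (cases "vi \<le> vj")
  case True
  then have "h vi \<le> h vj" using assms by (simp add: mono_def)
  then show ?thesis using True by (simp add: mult_nonpos_nonneg)
next
  case False
  then have "h vj \<le> h vi" using assms by (simp add: mono_def)
  then show ?thesis using False by (simp add: mult_nonneg_nonpos)
qed

lemma sat_gt_iff: "s > 0 \<Longrightarrow> -s \<le> c \<Longrightarrow> c < s \<Longrightarrow> (c < sat s v \<longleftrightarrow> c < v)"
  by (auto simp: sat_clamp)

lemma sat_ge_iff: "s > 0 \<Longrightarrow> -s < c \<Longrightarrow> c \<le> s \<Longrightarrow> (c \<le> sat s v \<longleftrightarrow> c \<le> v)"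
  by (auto simp: sat_clamp)

lemma sat_le_s: "s > 0 \<Longrightarrow> sat s v \<le> s" "s > 0 \<Longrightarrow> -s \<le> sat s v"
  by (auto simp: sat_clamp)

lemma antimono_conv:
  fixes f :: "real \<Rightarrow> real"
  assumes mono: "\<And>a t. 0 \<le> a \<Longrightarrow> a \<le> t \<Longrightarrow> f t \<le> f a" and lb: "\<And>t. 0 \<le> t \<Longrightarrow> m \<le> f t"
  shows "\<exists>L. (f \<longlongrightarrow> L) at_top"
proof -
  define L where "L = Inf (f ` {0..})"
  have bdd: "bdd_below (f ` {0..})" using lb by (intro bdd_belowI[of _ m]) auto
  have le: "L \<le> f t" if "t \<ge> 0" for t unfolding L_def using bdd that by (auto intro!: cInf_lower)
  have "(f \<longlongrightarrow> L) at_top"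
  proof (rule decreasing_tendsto)
    show "\<forall>\<^sub>F n in at_top. L \<le> f n" using le by (auto simp: eventually_at_top_linorder)
    fix y assume "L < y"
    then obtain t0 where t0: "t0 \<ge> 0" "f t0 < y" unfolding L_def using cInf_less_iff[OF _ bdd] by auto
    show "\<forall>\<^sub>F n in at_top. f n < y"
      unfolding eventually_at_top_linorder
      by (rule exI[of _ t0]) (use mono t0 in \<open>auto intro: le_less_trans\<close>)
  qed
  then show ?thesis by blast
qed

lemma no_osc:
  fixes f :: "real \<Rightarrow> real"
  assumes lim: "(f \<longlongrightarrow> L) at_top" and gb: "\<gamma> < \<beta>"
    and f1: "\<forall>T. \<exists>t\<ge>T. f t \<le> \<gamma>" and f2: "\<forall>T. \<exists>t\<ge>T. f t \<ge> \<beta>"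
  shows False
proof (cases "L < \<beta>")
  case True
  have "eventually (\<lambda>t. f t < \<beta>) at_top" using order_tendstoD(2)[OF lim True] .
  then obtain T where "\<forall>t\<ge>T. f t < \<beta>" by (auto simp: eventually_at_top_linorder)
  with f2 show False by (meson not_le)
next
  case False then have "\<gamma> < L" using gb by linarith
  have "eventually (\<lambda>t. \<gamma> < f t) at_top" using order_tendstoD(1)[OF lim \<open>\<gamma> < L\<close>] .
  then obtain T where "\<forall>t\<ge>T. \<gamma> < f t" by (auto simp: eventually_at_top_linorder)
  with f1 show False by (meson not_le)
qed

lemma osc:
  fixes f :: "real \<Rightarrow> real"
  assumes bd: "\<And>t. t \<ge> 0 \<Longrightarrow> \<bar>f t\<bar> \<le> B" and nc: "\<not> (\<exists>L. (f \<longlongrightarrow> L) at_top)"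
  shows "\<exists>a b. a < b \<and> (\<forall>T. \<exists>t\<ge>T. f t < a) \<and> (\<forall>T. \<exists>t\<ge>T. f t > b)"
proof -
  define l where "l = Liminf at_top (\<lambda>t. ereal (f t))"
  define u where "u = Limsup at_top (\<lambda>t. ereal (f t))"
  have lu: "l \<le> u" unfolding l_def u_def by (rule Liminf_le_Limsup) simp
  have ev0: "eventually (\<lambda>t. t \<ge> (0::real)) at_top" by (rule eventually_ge_at_top)
  have lb: "ereal (-B) \<le> l" unfolding l_def le_Liminf_iff
  proof (intro allI impI)
    fix y assume y: "y < ereal (-B)"
    show "\<forall>\<^sub>F t in at_top. y < ereal (f t)"
      using ev0
    proof eventually_elim
      case (elim t)
      then have "-B \<le> f t" using bd[of t] by (simp add: abs_le_iff)
      then have "ereal (-B) \<le> ereal (f t)" by simp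
      then show ?case using y by (rule less_le_trans[rotated])
    qed
  qed
  have ub: "u \<le> ereal B" unfolding u_def Limsup_le_iff
  proof (intro allI impI)
    fix y assume y: "y > ereal B"
    show "\<forall>\<^sub>F t in at_top. y > ereal (f t)"
      using ev0
    proof eventually_elim
      case (elim t)
      then have "f t \<le> B" using bd[of t] by (simp add: abs_le_iff)
      then have "ereal (f t) \<le> ereal B" by simp
      then show ?case using y by (rule le_less_trans)
    qed
  qed
  show ?thesis
  proof (cases "l = u")
    case True
    have fin: "\<bar>l\<bar> \<noteq> \<infinity>" using lb ub True by auto
    then obtain L where L: "l = ereal L" by (cases l) auto
    have "((\<lambda>t. ereal (f t)) \<longlongrightarrow> ereal L) at_top"
      using L True by (intro Liminf_eq_Limsup) (auto simp: l_def u_def)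
    then have "(f \<longlongrightarrow> L) at_top" by simp
    with nc show ?thesis by blast
  next
    case False
    then have "l < u" using lu by simp
    obtain a where a: "l < ereal a" "ereal a < u" using ereal_dense2[OF \<open>l < u\<close>] by blast
    obtain b where b: "ereal a < ereal b" "ereal b < u" using ereal_dense2[OF a(2)] by blast
    have fa: "\<exists>t\<ge>T. f t < a" for T
    proof (rule ccontr)
      assume "\<not> ?thesis"
      then have h: "\<forall>t\<ge>T. a \<le> f t" by (auto simp: not_less)
      have "ereal a \<le> l" unfolding l_def le_Liminf_iff
      proof (intro allI impI)
        fix y assume y: "y < ereal a"
        show "\<forall>\<^sub>F t in at_top. y < ereal (f t)"
          unfolding eventually_at_top_linorder
        proof (intro exI allI impI)
          fix t assume "t \<ge> T"
          then have "ereal a \<le> ereal (f t)" using h by simp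
          then show "y < ereal (f t)" using y by (rule less_le_trans[rotated])
        qed
      qed
      then show False using a by simp
    qed
    have fb: "\<exists>t\<ge>T. f t > b" for T
    proof (rule ccontr)
      assume "\<not> ?thesis"
      then have h: "\<forall>t\<ge>T. f t \<le> b" by (auto simp: not_less)
      have "u \<le> ereal b" unfolding u_def Limsup_le_iff
      proof (intro allI impI)
        fix y assume y: "y > ereal b"
        show "\<forall>\<^sub>F t in at_top. y > ereal (f t)"
          unfolding eventually_at_top_linorder
        proof (intro exI allI impI)
          fix t assume "t \<ge> T"
          then have "ereal (f t) \<le> ereal b" using h by simp
          then show "y > ereal (f t)" using y by (rule le_less_trans)
        qed
      qed
      then show False using b by simp
    qed
    show ?thesis using a b fa fb by auto
  qed
qed

definition psi :: "real \<Rightarrow> real \<Rightarrow> real \<Rightarrow> real" where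
  "psi sj c v = (if c < - sj then v else if c < sj then max (v - c) 0 else 0)"

definition tent :: "real \<Rightarrow> real \<Rightarrow> real \<Rightarrow> real" where
  "tent c d v = max (v - (c - d)) 0 - 2 * max (v - c) 0 + max (v - (c + d)) 0"

lemma tent_nn: "d > 0 \<Longrightarrow> tent c d v \<ge> 0"
  by (auto simp: tent_def max_def)

lemma tent_peak: "d > 0 \<Longrightarrow> tent c d c = d"
  by (auto simp: tent_def max_def)

lemma tent_out: "d > 0 \<Longrightarrow> v \<le> c - d \<or> c + d \<le> v \<Longrightarrow> tent c d v = 0"
  by (auto simp: tent_def max_def)

locale sys =
  fixes N :: nat and s :: "nat \<Rightarrow> real" and \<alpha> :: "nat \<Rightarrow> nat \<Rightarrow> real \<Rightarrow> real"
    and x :: "nat \<Rightarrow> real \<Rightarrow> real" and amax :: real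
  assumes s_pos: "\<forall>i<N. s i > 0"
    and s_inj: "\<forall>i<N. \<forall>j<N. s i = s j \<longrightarrow> i = j"
    and a_sym: "\<forall>i<N. \<forall>j<N. \<forall>t\<ge>0. \<alpha> i j t = \<alpha> j i t"
    and a_bnd: "\<forall>i<N. \<forall>j<N. \<forall>t\<ge>0. 0 \<le> \<alpha> i j t \<and> \<alpha> i j t \<le> amax"
    and sol: "caratheodory_solution N s \<alpha> x"
begin

definition "g i \<tau> = sat_rhs N s \<alpha> x i \<tau>"
definition "SM = (\<Sum>j<N. s j)"
definition "K = real N * amax * (2 * SM)"

lemma s_le_SM: "i < N \<Longrightarrow> s i \<le> SM"
  unfolding SM_def using s_pos
  by (intro member_le_sum) auto

lemma amax_nn: "N > 0 \<Longrightarrow> 0 \<le> amax"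
  using a_bnd by force

lemma K_nn: "0 \<le> K"
  unfolding K_def
proof (cases "N = 0")
  case True then show "0 \<le> real N * amax * (2 * SM)" by simp
next
  case False
  then have "0 \<le> amax" using amax_nn by simp
  moreover have "0 \<le> SM" unfolding SM_def using s_pos by (intro sum_nonneg) (auto intro: less_imp_le)
  ultimately show "0 \<le> real N * amax * (2 * SM)" by simp
qed

lemma g_bound:
  assumes i: "i < N" and t: "\<tau> \<ge> 0"
  shows "\<bar>g i \<tau>\<bar> \<le> K"
proof -
  have "\<bar>g i \<tau>\<bar> \<le> (\<Sum>j<N. \<bar>\<alpha> i j \<tau> * (sat (s j) (x j \<tau>) - sat (s i) (x i \<tau>))\<bar>)"
    unfolding g_def sat_rhs_def by (rule sum_abs)
  also have "\<dots> \<le> (\<Sum>j<N. amax * (2 * SM))"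
  proof (rule sum_mono)
    fix j assume j: "j \<in> {..<N}"
    have a: "0 \<le> \<alpha> i j \<tau>" "\<alpha> i j \<tau> \<le> amax" using a_bnd i j t by auto
    have "\<bar>sat (s j) (x j \<tau>)\<bar> \<le> s j" "\<bar>sat (s i) (x i \<tau>)\<bar> \<le> s i"
      using sat_bound s_pos i j by auto
    moreover have "s j \<le> SM" "s i \<le> SM" using s_le_SM i j by auto
    ultimately have b: "\<bar>sat (s j) (x j \<tau>) - sat (s i) (x i \<tau>)\<bar> \<le> 2 * SM" by linarith
    show "\<bar>\<alpha> i j \<tau> * (sat (s j) (x j \<tau>) - sat (s i) (x i \<tau>))\<bar> \<le> amax * (2 * SM)"
      unfolding abs_mult using a b by (intro mult_mono) auto
  qed
  also have "\<dots> = K" by (simp add: K_def)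
  finally show ?thesis .
qed

lemma g_eq: "g i = sat_rhs N s \<alpha> x i"
  by (rule ext) (simp add: g_def)

lemma sol_at:
  assumes i: "i < N" and t: "0 \<le> t"
  shows "set_integrable lebesgue {0..t} (g i)" "g i integrable_on {0..t}"
    "x i t = x i 0 + integral {0..t} (g i)"
proof -
  have H: "set_integrable lebesgue {0..t} (sat_rhs N s \<alpha> x i) \<and>
        x i t = x i 0 + (LINT \<tau>:{0..t}|lebesgue. sat_rhs N s \<alpha> x i \<tau>)"
    using sol i t unfolding caratheodory_solution_def by blast
  then show I: "set_integrable lebesgue {0..t} (g i)" unfolding g_eq by blast
  show "g i integrable_on {0..t}" using set_lebesgue_integral_eq_integral(1)[OF I] .
  have "(LINT \<tau>:{0..t}|lebesgue. g i \<tau>) = integral {0..t} (g i)"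
    using set_lebesgue_integral_eq_integral(2)[OF I] .
  then show "x i t = x i 0 + integral {0..t} (g i)" using H unfolding g_eq by simp
qed

lemma xdiff:
  assumes i: "i < N" and ab: "0 \<le> a" "a \<le> b"
  shows "g i integrable_on {a..b}" "x i b - x i a = integral {a..b} (g i)"
proof -
  have b0: "0 \<le> b" using ab by linarith
  have ib: "g i integrable_on {0..b}" "x i b = x i 0 + integral {0..b} (g i)" using sol_at[OF i b0] by auto
  have ia: "x i a = x i 0 + integral {0..a} (g i)" using sol_at[OF i ab(1)] by auto
  show "g i integrable_on {a..b}"
    using integrable_subinterval_real[OF ib(1)] ab by auto
  have "integral {0..b} (g i) = integral {0..a} (g i) + integral {a..b} (g i)"
    using Henstock_Kurzweil_Integration.integral_combine[OF ab ib(1)] by simp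
  then show "x i b - x i a = integral {a..b} (g i)"
    using ib ia by simp
qed

lemma xlip:
  assumes i: "i < N" and ab: "0 \<le> a" "a \<le> b"
  shows "\<bar>x i b - x i a\<bar> \<le> K * (b - a)"
proof -
  have I: "g i integrable_on {a..b}" and e: "x i b - x i a = integral {a..b} (g i)"
    using xdiff[OF assms] by auto
  have gb: "g i \<tau> \<le> K \<and> - K \<le> g i \<tau>" if "\<tau> \<in> {a..b}" for \<tau>
  proof -
    have "\<bar>g i \<tau>\<bar> \<le> K" using g_bound i ab that by auto
    then show ?thesis by linarith
  qed
  have l1: "integral {a..b} (g i) \<le> integral {a..b} (\<lambda>_. K)"
    using I gb by (intro integral_le) auto
  have l2: "integral {a..b} (\<lambda>_. - K) \<le> integral {a..b} (g i)"
    using I gb by (intro integral_le) auto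
  have c1: "integral {a..b} (\<lambda>_. K) = (b - a) * K" using ab by simp
  have c2: "integral {a..b} (\<lambda>_. - K) = - ((b - a) * K)" using ab by simp
  have "x i b - x i a \<le> K * (b - a)" using l1 e unfolding c1 by (simp add: mult.commute)
  moreover have "- (K * (b - a)) \<le> x i b - x i a" using l2 e unfolding c2 by (simp add: mult.commute)
  ultimately have "x i b - x i a \<le> K * (b - a)" "- (K * (b - a)) \<le> x i b - x i a" by simp_all
  then show ?thesis by (simp add: abs_le_iff)
qed


lemma pointwise_bound:
  fixes h :: "real \<Rightarrow> real" and B :: real
  assumes hm: "mono h" and hb: "\<forall>v. \<bar>h v\<bar> \<le> B"
    and ab: "0 \<le> a" "a \<le> b" and tau: "a \<le> \<tau>" "\<tau> \<le> b"
  shows "(\<Sum>i<N. h (sat (s i) (x i b)) * g i \<tau>) \<le> (2*real N*real N*amax*B*K) * (b - a)"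
proof -
  define \<sigma> where "\<sigma> i = h (sat (s i) (x i b))" for i
  define w where "w k = sat (s k) (x k \<tau>)" for k
  define v where "v k = sat (s k) (x k b)" for k
  define A where "A i j = \<alpha> i j \<tau>" for i j
  define e where "e = K * (b - a)"
  have t0: "\<tau> \<ge> 0" using ab tau by auto
  have geq: "g i \<tau> = (\<Sum>j<N. A i j * (w j - w i))" for i
    by (simp add: g_def sat_rhs_def A_def w_def)
  have S1: "(\<Sum>i<N. \<sigma> i * g i \<tau>) = (\<Sum>i<N. \<Sum>j<N. \<sigma> i * A i j * (w j - w i))"
    by (simp add: geq sum_distrib_left mult.assoc)
  have "(\<Sum>i<N. \<Sum>j<N. \<sigma> i * A i j * (w j - w i)) = (\<Sum>j<N. \<Sum>i<N. \<sigma> i * A i j * (w j - w i))"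
    by (rule sum.swap)
  also have "\<dots> = (\<Sum>i<N. \<Sum>j<N. \<sigma> j * A i j * (w i - w j))"
  proof (rule sum.cong[OF refl], rule sum.cong[OF refl])
    fix i j assume "i \<in> {..<N}" "j \<in> {..<N}"
    then have "A j i = A i j" using a_sym t0 by (auto simp: A_def)
    then show "\<sigma> j * A j i * (w i - w j) = \<sigma> j * A i j * (w i - w j)" by simp
  qed
  finally have S2: "(\<Sum>i<N. \<Sum>j<N. \<sigma> i * A i j * (w j - w i)) = (\<Sum>i<N. \<Sum>j<N. \<sigma> j * A i j * (w i - w j))" .
  have "2 * (\<Sum>i<N. \<sigma> i * g i \<tau>) = (\<Sum>i<N. \<Sum>j<N. \<sigma> i * A i j * (w j - w i)) + (\<Sum>i<N. \<Sum>j<N. \<sigma> j * A i j * (w i - w j))"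
    using S1 S2 by simp
  also have "\<dots> = (\<Sum>i<N. \<Sum>j<N. A i j * ((\<sigma> i - \<sigma> j) * (w j - w i)))"
    by (simp add: sum.distrib[symmetric] algebra_simps)
  also have "\<dots> \<le> (\<Sum>i<N. \<Sum>j<N. amax * (4 * B * e))"
  proof (rule sum_mono, rule sum_mono)
    fix i j assume i: "i \<in> {..<N}" and j: "j \<in> {..<N}"
    have wv: "\<bar>w k - v k\<bar> \<le> e" if k: "k < N" for k
    proof -
      have "\<bar>w k - v k\<bar> \<le> \<bar>x k \<tau> - x k b\<bar>" unfolding w_def v_def using sat_lip s_pos k by auto
      also have "\<dots> = \<bar>x k b - x k \<tau>\<bar>" by simp
      also have "\<dots> \<le> K * (b - \<tau>)" using xlip[OF k t0 tau(2)] .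
      also have "\<dots> \<le> e" unfolding e_def using K_nn tau by (intro mult_left_mono) auto
      finally show ?thesis .
    qed
    show "A i j * ((\<sigma> i - \<sigma> j) * (w j - w i)) \<le> amax * (4 * B * e)"
    proof (rule term_bound)
      show "0 \<le> A i j" "A i j \<le> amax" using a_bnd i j t0 by (auto simp: A_def)
      show "\<bar>\<sigma> i\<bar> \<le> B" "\<bar>\<sigma> j\<bar> \<le> B" using hb by (auto simp: \<sigma>_def)
      show "(\<sigma> i - \<sigma> j) * (v j - v i) \<le> 0" unfolding \<sigma>_def v_def by (rule mono_sign[OF hm])
      show "\<bar>w i - v i\<bar> \<le> e" "\<bar>w j - v j\<bar> \<le> e" using wv i j by auto
    qed
  qed
  also have "\<dots> = real N * real N * (amax * (4 * B * e))" by simp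
  finally show ?thesis unfolding \<sigma>_def e_def by (simp add: algebra_simps)
qed

lemma lyap_step:
  fixes h :: "real \<Rightarrow> real" and B :: real and \<Psi> :: "nat \<Rightarrow> real \<Rightarrow> real"
  assumes hm: "mono h" and hb: "\<forall>v. \<bar>h v\<bar> \<le> B"
    and \<Psi>: "\<forall>i<N. \<forall>u v. \<Psi> i v - \<Psi> i u \<le> h (sat (s i) v) * (v - u)"
    and ab: "0 \<le> a" "a \<le> b"
  shows "(\<Sum>i<N. \<Psi> i (x i b)) - (\<Sum>i<N. \<Psi> i (x i a)) \<le> (2*real N*real N*amax*B*K) * (b-a)^2"
proof -
  define \<sigma> where "\<sigma> i = h (sat (s i) (x i b))" for i
  define C where "C = 2*real N*real N*amax*B*K"
  have "(\<Sum>i<N. \<Psi> i (x i b)) - (\<Sum>i<N. \<Psi> i (x i a)) = (\<Sum>i<N. \<Psi> i (x i b) - \<Psi> i (x i a))"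
    by (simp add: sum_subtractf)
  also have "\<dots> \<le> (\<Sum>i<N. \<sigma> i * (x i b - x i a))"
    using \<Psi> by (intro sum_mono) (auto simp: \<sigma>_def)
  also have "\<dots> = (\<Sum>i<N. integral {a..b} (\<lambda>\<tau>. \<sigma> i * g i \<tau>))"
    using xdiff[OF _ ab] by (intro sum.cong) auto
  also have "\<dots> = integral {a..b} (\<lambda>\<tau>. \<Sum>i<N. \<sigma> i * g i \<tau>)"
    using xdiff[OF _ ab] by (intro integral_sum[symmetric]) (auto intro: integrable_on_mult_right)
  also have "\<dots> \<le> integral {a..b} (\<lambda>\<tau>. C * (b - a))"
  proof (rule integral_le)
    show "(\<lambda>\<tau>. \<Sum>i<N. \<sigma> i * g i \<tau>) integrable_on {a..b}"
      using xdiff[OF _ ab] by (intro integrable_sum) (auto intro: integrable_on_mult_right)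
    show "(\<lambda>\<tau>. C * (b - a)) integrable_on {a..b}" by (rule Henstock_Kurzweil_Integration.integrable_const_ivl)
    fix \<tau> assume "\<tau> \<in> {a..b}"
    then show "(\<Sum>i<N. \<sigma> i * g i \<tau>) \<le> C * (b - a)"
      unfolding \<sigma>_def C_def using pointwise_bound[OF hm hb ab] by auto
  qed
  also have "\<dots> = C * (b-a)^2" using ab by (simp add: power2_eq_square)
  finally show ?thesis unfolding C_def .
qed

lemma lyap:
  fixes h :: "real \<Rightarrow> real" and B :: real and \<Psi> :: "nat \<Rightarrow> real \<Rightarrow> real"
  assumes hm: "mono h" and hb: "\<forall>v. \<bar>h v\<bar> \<le> B"
    and \<Psi>: "\<forall>i<N. \<forall>u v. \<Psi> i v - \<Psi> i u \<le> h (sat (s i) v) * (v - u)"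
    and at: "0 \<le> a" "a \<le> t"
  shows "(\<Sum>i<N. \<Psi> i (x i t)) \<le> (\<Sum>i<N. \<Psi> i (x i a))"
proof -
  define F where "F r = (\<Sum>i<N. \<Psi> i (x i r))" for r
  define C where "C = 2*real N*real N*amax*B*K"
  have step: "F b - F c \<le> C * (b - c)^2" if "0 \<le> c" "c \<le> b" for b c
    unfolding F_def C_def by (rule lyap_step[OF hm hb \<Psi> that])
  have main: "F t - F a \<le> C * (t - a)^2 / real n" if n: "n > 0" for n :: nat
  proof -
    define d where "d = (t - a) / real n"
    have d0: "d \<ge> 0" using at n by (simp add: d_def)
    have ind: "F (a + real m * d) - F a \<le> real m * (C * d^2)" for m
    proof (induction m)
      case 0 then show ?case by simp
    next
      case (Suc m)
      have "F (a + real (Suc m) * d) - F (a + real m * d) \<le> C * ((a + real (Suc m) * d) - (a + real m * d))^2"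
        using d0 at by (intro step) (auto simp: algebra_simps)
      also have "\<dots> = C * d^2" by (simp add: algebra_simps)
      finally show ?case using Suc by (simp add: algebra_simps)
    qed
    have "a + real n * d = t" using n by (simp add: d_def)
    then have "F t - F a \<le> real n * (C * d^2)" using ind[of n] by simp
    also have "\<dots> = C * (t - a)^2 / real n" using n by (simp add: d_def power2_eq_square)
    finally show ?thesis .
  qed
  show ?thesis
  proof (rule ccontr)
    assume "\<not> ?thesis"
    then have pos: "F t - F a > 0" unfolding F_def by simp
    obtain n :: nat where n: "n > C * (t - a)^2 / (F t - F a)" using reals_Archimedean2 by blast
    have "C * (t - a)^2 / (F t - F a) \<ge> 0 \<or> C * (t - a)^2 < 0" using pos by (auto simp: divide_nonneg_pos)
    then have npos: "n > 0"
    proof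
      assume "C * (t - a)^2 / (F t - F a) \<ge> 0" then show "n > 0" using n by linarith
    next
      assume "C * (t - a)^2 < 0"
      then have "C * (t - a)^2 / real 1 < F t - F a" using pos by simp
      then show "n > 0" using main[of 1] by simp
    qed
    have "C * (t - a)^2 < (F t - F a) * real n" using n pos by (simp add: divide_less_eq mult.commute)
    then have "C * (t - a)^2 / real n < F t - F a" using npos by (simp add: divide_less_eq)
    then show False using main[OF npos] by simp
  qed
qed


lemma x_cont: "i < N \<Longrightarrow> continuous_on {0..} (x i)"
proof -
  assume i: "i < N"
  have "K-lipschitz_on {0..} (x i)"
  proof (rule lipschitz_onI)
    fix u v :: real assume "u \<in> {0..}" "v \<in> {0..}"
    then show "dist (x i u) (x i v) \<le> K * dist u v"
      using xlip[OF i, of u v] xlip[OF i, of v u] by (cases "u \<le> v") (auto simp: dist_real_def abs_minus_commute)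
  qed (rule K_nn)
  then show ?thesis by (rule lipschitz_on_continuous_on)
qed

lemma x_bounded: "\<exists>Bx\<ge>0. \<forall>i<N. \<forall>t\<ge>0. \<bar>x i t\<bar> \<le> Bx"
proof -
  define P where "P = (\<Sum>i<N. max (x i 0) 0)"
  define Q where "Q = (\<Sum>i<N. max (- x i 0) 0)"
  have up: "(\<Sum>i<N. max (x i t) 0) \<le> P" if "t \<ge> 0" for t :: real
    unfolding P_def
  proof (rule lyap[where h="\<lambda>v. if 0 < v then 1 else 0" and B=1 and \<Psi>="\<lambda>i v. max v 0", OF _ _ _ order_refl that])
    show "mono (\<lambda>v::real. if 0 < v then 1 else 0::real)" by (auto simp: mono_def)
    show "\<forall>v. \<bar>if 0 < v then 1 else 0::real\<bar> \<le> 1" by auto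
    show "\<forall>i<N. \<forall>u v. max v 0 - max u 0 \<le> (if 0 < sat (s i) v then 1 else 0) * (v - u)"
    proof (intro allI impI)
      fix i u v assume i: "i < N"
      have "0 < sat (s i) v \<longleftrightarrow> 0 < v" using sat_gt_iff[of "s i" 0 v] s_pos i by auto
      then show "max v 0 - max u 0 \<le> (if 0 < sat (s i) v then 1 else 0) * (v - u)" by auto
    qed
  qed
  have down: "(\<Sum>i<N. max (- x i t) 0) \<le> Q" if "t \<ge> 0" for t :: real
    unfolding Q_def
  proof (rule lyap[where h="\<lambda>v. if v < 0 then -1 else 0" and B=1 and \<Psi>="\<lambda>i v. max (- v) 0", OF _ _ _ order_refl that])
    show "mono (\<lambda>v::real. if v < 0 then -1 else 0::real)" by (auto simp: mono_def)
    show "\<forall>v. \<bar>if v < 0 then -1 else 0::real\<bar> \<le> 1" by auto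
    show "\<forall>i<N. \<forall>u v. max (- v) 0 - max (- u) 0 \<le> (if sat (s i) v < 0 then -1 else 0) * (v - u)"
    proof (intro allI impI)
      fix i u v assume i: "i < N"
      have "0 \<le> sat (s i) v \<longleftrightarrow> 0 \<le> v" using sat_ge_iff[of "s i" 0 v] s_pos i by auto
      then show "max (- v) 0 - max (- u) 0 \<le> (if sat (s i) v < 0 then -1 else 0) * (v - u)" by auto
    qed
  qed
  have P0: "0 \<le> P" "0 \<le> Q" unfolding P_def Q_def by (auto intro: sum_nonneg)
  have bnd: "\<bar>x i t\<bar> \<le> max P Q" if i: "i < N" and t: "t \<ge> 0" for i t
  proof -
    have "max (x i t) 0 \<le> (\<Sum>i<N. max (x i t) 0)" using i by (intro member_le_sum) auto
    moreover have "max (- x i t) 0 \<le> (\<Sum>i<N. max (- x i t) 0)" using i by (intro member_le_sum) auto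
    moreover have "x i t \<le> max (x i t) 0" "- x i t \<le> max (- x i t) 0" by simp_all
    moreover have "P \<le> max P Q" "Q \<le> max P Q" by simp_all
    ultimately have "x i t \<le> max P Q" "- x i t \<le> max P Q" using up[OF t] down[OF t] by linarith+
    then show ?thesis by (simp add: abs_le_iff)
  qed
  show ?thesis
  proof (rule exI[of _ "max P Q"], intro conjI allI impI)
    show "0 \<le> max P Q" using P0 by simp
    fix i :: nat and t :: real assume "i < N" "0 \<le> t"
    then show "\<bar>x i t\<bar> \<le> max P Q" by (rule bnd)
  qed
qed

lemma excess_conv:
  assumes k: "k < N"
  shows "\<exists>E. ((\<lambda>t. max (x k t - s k) 0) \<longlongrightarrow> E) at_top"
proof -
  define F1 where "F1 t = (\<Sum>j<N. if s k \<le> s j then max (x j t - s k) 0 else 0)" for t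
  define F2 where "F2 t = (\<Sum>j<N. if s k < s j then max (x j t - s k) 0 else 0)" for t
  have sk: "s k > 0" using s_pos k by auto
  have m1: "F1 t \<le> F1 a" if "0 \<le> a" "a \<le> t" for a t
    unfolding F1_def
  proof (rule lyap[where h="\<lambda>v. if s k \<le> v then 1 else 0" and B=1 and \<Psi>="\<lambda>i v. if s k \<le> s i then max (v - s k) 0 else 0", OF _ _ _ that])
    show "mono (\<lambda>v. if s k \<le> v then 1 else 0::real)" by (auto simp: mono_def)
    show "\<forall>v. \<bar>if s k \<le> v then 1 else 0::real\<bar> \<le> 1" by auto
    show "\<forall>i<N. \<forall>u v. (if s k \<le> s i then max (v - s k) 0 else 0) - (if s k \<le> s i then max (u - s k) 0 else 0)
            \<le> (if s k \<le> sat (s i) v then 1 else 0) * (v - u)"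
    proof (intro allI impI)
      fix i u v assume i: "i < N"
      have si: "s i > 0" using s_pos i by auto
      show "(if s k \<le> s i then max (v - s k) 0 else 0) - (if s k \<le> s i then max (u - s k) 0 else 0)
            \<le> (if s k \<le> sat (s i) v then 1 else 0) * (v - u)"
      proof (cases "s k \<le> s i")
        case True
        have "s k \<le> sat (s i) v \<longleftrightarrow> s k \<le> v" using sat_ge_iff[of "s i" "s k" v] si sk True by auto
        then show ?thesis using True by auto
      next
        case False
        then have "\<not> s k \<le> sat (s i) v" using sat_le_s(1)[OF si, of v] by auto
        then show ?thesis using False by auto
      qed
    qed
  qed
  have m2: "F2 t \<le> F2 a" if "0 \<le> a" "a \<le> t" for a t
    unfolding F2_def
  proof (rule lyap[where h="\<lambda>v. if s k < v then 1 else 0" and B=1 and \<Psi>="\<lambda>i v. if s k < s i then max (v - s k) 0 else 0", OF _ _ _ that])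
    show "mono (\<lambda>v. if s k < v then 1 else 0::real)" by (auto simp: mono_def)
    show "\<forall>v. \<bar>if s k < v then 1 else 0::real\<bar> \<le> 1" by auto
    show "\<forall>i<N. \<forall>u v. (if s k < s i then max (v - s k) 0 else 0) - (if s k < s i then max (u - s k) 0 else 0)
            \<le> (if s k < sat (s i) v then 1 else 0) * (v - u)"
    proof (intro allI impI)
      fix i u v assume i: "i < N"
      have si: "s i > 0" using s_pos i by auto
      show "(if s k < s i then max (v - s k) 0 else 0) - (if s k < s i then max (u - s k) 0 else 0)
            \<le> (if s k < sat (s i) v then 1 else 0) * (v - u)"
      proof (cases "s k < s i")
        case True
        have "s k < sat (s i) v \<longleftrightarrow> s k < v" using sat_gt_iff[of "s i" "s k" v] si sk True by auto
        then show ?thesis using True by auto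
      next
        case False
        then have "\<not> s k < sat (s i) v" using sat_le_s(1)[OF si, of v] by auto
        then show ?thesis using False by auto
      qed
    qed
  qed
  have "\<exists>L. (F1 \<longlongrightarrow> L) at_top" by (rule antimono_conv[OF m1, where m=0]) (auto simp: F1_def intro: sum_nonneg)
  then obtain L1 where L1: "(F1 \<longlongrightarrow> L1) at_top" by blast
  have "\<exists>L. (F2 \<longlongrightarrow> L) at_top" by (rule antimono_conv[OF m2, where m=0]) (auto simp: F2_def intro: sum_nonneg)
  then obtain L2 where L2: "(F2 \<longlongrightarrow> L2) at_top" by blast
  have eq: "F1 t - F2 t = max (x k t - s k) 0" for t
  proof -
    have "F1 t - F2 t = (\<Sum>j<N. (if s k \<le> s j then max (x j t - s k) 0 else 0) - (if s k < s j then max (x j t - s k) 0 else 0))"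
      unfolding F1_def F2_def by (simp add: sum_subtractf)
    also have "\<dots> = (\<Sum>j<N. if j = k then max (x k t - s k) 0 else 0)"
    proof (rule sum.cong[OF refl])
      fix j assume j: "j \<in> {..<N}"
      have "s j = s k \<longleftrightarrow> j = k" using s_inj j k by auto
      then show "(if s k \<le> s j then max (x j t - s k) 0 else 0) - (if s k < s j then max (x j t - s k) 0 else 0)
          = (if j = k then max (x k t - s k) 0 else 0)" by auto
    qed
    also have "\<dots> = max (x k t - s k) 0" using k by simp
    finally show ?thesis .
  qed
  have "((\<lambda>t. F1 t - F2 t) \<longlongrightarrow> L1 - L2) at_top" using L1 L2 by (rule tendsto_diff)
  then show ?thesis unfolding eq by blast
qed

lemma caseA:
  assumes k: "k < N" and ab: "a < b" "s k < b"
    and fa: "\<forall>T. \<exists>t\<ge>T. x k t < a" and fb: "\<forall>T. \<exists>t\<ge>T. x k t > b"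
  shows False
proof -
  obtain E where E: "((\<lambda>t. max (x k t - s k) 0) \<longlongrightarrow> E) at_top" using excess_conv[OF k] by blast
  show False
  proof (rule no_osc[OF E, of "max (a - s k) 0" "b - s k"])
    show "max (a - s k) 0 < b - s k" using ab by auto
    show "\<forall>T. \<exists>t\<ge>T. max (x k t - s k) 0 \<le> max (a - s k) 0"
      using fa by (meson less_imp_le max.mono diff_right_mono order_refl)
    show "\<forall>T. \<exists>t\<ge>T. b - s k \<le> max (x k t - s k) 0"
      using fb by (meson less_imp_le max.coboundedI1 diff_right_mono)
  qed
qed

definition "Gc c t = (\<Sum>j<N. psi (s j) c (x j t))"

lemma Gc_conv: "\<exists>L. (Gc c \<longlongrightarrow> L) at_top"
proof -
  obtain Bx where Bx: "Bx \<ge> 0" "\<forall>i<N. \<forall>t\<ge>0. \<bar>x i t\<bar> \<le> Bx" using x_bounded by blast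
  have m: "Gc c t \<le> Gc c a" if "0 \<le> a" "a \<le> t" for a t
    unfolding Gc_def
  proof (rule lyap[where h="\<lambda>v. if c < v then 1 else 0" and B=1 and \<Psi>="\<lambda>i v. psi (s i) c v", OF _ _ _ that])
    show "mono (\<lambda>v. if c < v then 1 else 0::real)" by (auto simp: mono_def)
    show "\<forall>v. \<bar>if c < v then 1 else 0::real\<bar> \<le> 1" by auto
    show "\<forall>i<N. \<forall>u v. psi (s i) c v - psi (s i) c u \<le> (if c < sat (s i) v then 1 else 0) * (v - u)"
    proof (intro allI impI)
      fix i u v assume i: "i < N"
      have si: "s i > 0" using s_pos i by auto
      consider "c < - s i" | "- s i \<le> c" "c < s i" | "s i \<le> c" by linarith
      then show "psi (s i) c v - psi (s i) c u \<le> (if c < sat (s i) v then 1 else 0) * (v - u)"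
      proof cases
        case 1
        then have "c < sat (s i) v" using sat_le_s(2)[OF si, of v] by auto
        then show ?thesis using 1 by (simp add: psi_def)
      next
        case 2
        then have "c < sat (s i) v \<longleftrightarrow> c < v" using sat_gt_iff[OF si] by auto
        then show ?thesis using 2 by (auto simp: psi_def)
      next
        case 3
        then have "\<not> c < sat (s i) v" using sat_le_s(1)[OF si, of v] by auto
        then show ?thesis using 3 si by (simp add: psi_def)
      qed
    qed
  qed
  have lb: "- (real N * Bx) \<le> Gc c t" if "t \<ge> 0" for t
  proof -
    have "(\<Sum>j<N. - Bx) \<le> Gc c t"
      unfolding Gc_def
    proof (rule sum_mono)
      fix j assume j: "j \<in> {..<N}"
      have "\<bar>x j t\<bar> \<le> Bx" using Bx j that by auto
      then show "- Bx \<le> psi (s j) c (x j t)"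
        using Bx(1) by (auto simp: psi_def)
    qed
    then show ?thesis by simp
  qed
  show ?thesis by (rule antimono_conv[OF m lb])
qed

lemma psi_tent:
  assumes d: "d > 0" and sj: "sj > 0"
    and av: "\<not> (c - d \<le> sj \<and> sj \<le> c + d)" "\<not> (c - d \<le> - sj \<and> - sj \<le> c + d)"
  shows "psi sj (c - d) v - 2 * psi sj c v + psi sj (c + d) v = (if - sj < c - d \<and> c + d < sj then tent c d v else 0)"
proof -
  consider "c + d < - sj" | "- sj < c - d" "c + d < sj" | "sj < c - d"
    using av sj by linarith
  then show ?thesis
  proof cases
    case 1 then show ?thesis using d sj by (simp add: psi_def)
  next
    case 2 then show ?thesis using d sj by (simp add: psi_def tent_def)
  next
    case 3 then show ?thesis using d sj by (simp add: psi_def)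
  qed
qed

lemma Gc_tent:
  assumes d: "d > 0" and avoid: "\<forall>j<N. \<not> (c - d \<le> s j \<and> s j \<le> c + d) \<and> \<not> (c - d \<le> - s j \<and> - s j \<le> c + d)"
  shows "Gc (c - d) t - 2 * Gc c t + Gc (c + d) t
     = (\<Sum>j<N. if - s j < c - d \<and> c + d < s j then tent c d (x j t) else 0)"
proof -
  have "Gc (c - d) t - 2 * Gc c t + Gc (c + d) t
    = (\<Sum>j<N. psi (s j) (c - d) (x j t) - 2 * psi (s j) c (x j t) + psi (s j) (c + d) (x j t))"
    unfolding Gc_def by (simp only: sum.distrib sum_subtractf sum_distrib_left)
  also have "\<dots> = (\<Sum>j<N. if - s j < c - d \<and> c + d < s j then tent c d (x j t) else 0)"
  proof (rule sum.cong[OF refl])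
    fix j assume j: "j \<in> {..<N}"
    show "psi (s j) (c - d) (x j t) - 2 * psi (s j) c (x j t) + psi (s j) (c + d) (x j t)
        = (if - s j < c - d \<and> c + d < s j then tent c d (x j t) else 0)"
      using psi_tent[OF d] s_pos avoid j by auto
  qed
  finally show ?thesis .
qed

lemma interior_False:
  assumes k: "k < N" and ab: "a < b" "- s k \<le> a" "b \<le> s k"
    and fa: "\<forall>T. \<exists>t\<ge>T. x k t < a" and fb: "\<forall>T. \<exists>t\<ge>T. x k t > b"
  shows False
proof -
  define M where "M = 3 * N + 1"
  define d where "d = (b - a) / (4 * real M)"
  define c where "c l = a + (4 * real l + 2) * d" for l :: nat
  define I where "I l = {c l - d .. c l + d}" for l
  have Mpos: "real M > 0" by (simp add: M_def)
  have d0: "d > 0" using ab Mpos by (simp add: d_def)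
  have bd: "b = a + 4 * real M * d" using Mpos by (simp add: d_def)
  have Isub: "a < c l - d \<and> c l + d < b" if "l < M" for l
  proof -
    have "real l + 1 \<le> real M" using that by simp
    then have "(4 * real l + 3) * d < 4 * real M * d" using d0 by (intro mult_strict_right_mono) auto
    moreover have "c l - d = a + (4 * real l + 1) * d" "c l + d = a + (4 * real l + 3) * d"
      by (simp_all add: c_def algebra_simps)
    moreover have "(4 * real l + 1) * d > 0" using d0 by (intro mult_pos_pos) auto
    moreover have "4 * real M * d = b - a" using bd by simp
    ultimately show ?thesis by linarith
  qed
  have Idisj: "l1 = l2" if "p \<in> I l1" "p \<in> I l2" for p l1 l2
  proof (rule ccontr)
    assume ne: "l1 \<noteq> l2"
    have "\<bar>c l1 - c l2\<bar> \<le> 2 * d" using that by (auto simp: I_def)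
    moreover have "c l1 - c l2 = 4 * d * (real l1 - real l2)" by (simp add: c_def algebra_simps)
    moreover have "\<bar>real l1 - real l2\<bar> \<ge> 1" using ne by linarith
    ultimately have "4 * d * 1 \<le> 2 * d" using d0
      by (metis abs_mult abs_of_pos mult_left_mono order_trans zero_le_mult_iff less_imp_le
          mult_pos_pos zero_less_numeral)
    then show False using d0 by simp
  qed
  define good where "good l \<longleftrightarrow> (\<forall>j<N. s j \<notin> I l \<and> - s j \<notin> I l)" for l
  define T where "T l t = (\<Sum>j<N. if - s j < c l - d \<and> c l + d < s j then tent (c l) d (x j t) else 0)" for l t
  have Tnn: "T l t \<ge> 0" for l t unfolding T_def using tent_nn[OF d0] by (auto intro: sum_nonneg)
  have Tconv: "\<exists>L. (T l \<longlongrightarrow> L) at_top" if "good l" for l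
  proof -
    have av: "\<forall>j<N. \<not> (c l - d \<le> s j \<and> s j \<le> c l + d) \<and> \<not> (c l - d \<le> - s j \<and> - s j \<le> c l + d)"
      using that by (auto simp: good_def I_def)
    have eq: "T l = (\<lambda>t. Gc (c l - d) t - 2 * Gc (c l) t + Gc (c l + d) t)"
      using Gc_tent[OF d0 av] by (auto simp: T_def)
    obtain L1 L2 L3 where "(Gc (c l - d) \<longlongrightarrow> L1) at_top" "(Gc (c l) \<longlongrightarrow> L2) at_top" "(Gc (c l + d) \<longlongrightarrow> L3) at_top"
      using Gc_conv by meson
    then have "((\<lambda>t. Gc (c l - d) t - 2 * Gc (c l) t + Gc (c l + d) t) \<longlongrightarrow> L1 - 2 * L2 + L3) at_top"
      by (intro tendsto_intros)
    then show ?thesis unfolding eq by blast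
  qed
  have Tfreq: "\<forall>S. \<exists>t\<ge>S. T l t \<ge> d" if l: "l < M" for l
  proof
    fix S
    obtain t1 where t1: "t1 \<ge> max S 0" "x k t1 < a" using fa by blast
    obtain t2 where t2: "t2 \<ge> t1" "x k t2 > b" using fb by blast
    have cl: "a < c l" "c l < b" using Isub[OF l] d0 by auto
    have "continuous_on {t1..t2} (x k)"
      by (rule continuous_on_subset[OF x_cont[OF k]]) (use t1 in auto)
    then obtain t where t: "t1 \<le> t" "t \<le> t2" "x k t = c l"
      using IVT'[of "x k" t1 "c l" t2] t1 t2 cl by auto
    have kin: "- s k < c l - d \<and> c l + d < s k" using Isub[OF l] ab by auto
    have "d = (if - s k < c l - d \<and> c l + d < s k then tent (c l) d (x k t) else 0)"
      using kin t(3) tent_peak[OF d0] by simp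
    also have "\<dots> \<le> T l t" unfolding T_def
      by (rule member_le_sum) (use k tent_nn[OF d0] in auto)
    finally show "\<exists>t\<ge>S. T l t \<ge> d" using t t1 by (intro exI[of _ t]) auto
  qed
  have Tev: "eventually (\<lambda>t. T l t > d / 2) at_top" if l: "l < M" and g: "good l" for l
  proof -
    obtain L where L: "(T l \<longlongrightarrow> L) at_top" using Tconv[OF g] by blast
    have "L \<ge> d"
    proof (rule ccontr)
      assume "\<not> L \<ge> d"
      then have "eventually (\<lambda>t. T l t < d) at_top" using order_tendstoD(2)[OF L] by simp
      then obtain S where "\<forall>t\<ge>S. T l t < d" by (auto simp: eventually_at_top_linorder)
      with Tfreq[OF l] show False by (meson not_le)
    qed
    then show ?thesis using order_tendstoD(1)[OF L, of "d/2"] d0 by simp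
  qed
  have "eventually (\<lambda>t. \<forall>l\<in>{l. l < M \<and> good l}. T l t > d / 2) at_top"
    by (rule eventually_ball_finite) (use Tev in auto)
  then obtain t0 where t0: "\<forall>t\<ge>t0. \<forall>l\<in>{l. l < M \<and> good l}. T l t > d / 2"
    by (auto simp: eventually_at_top_linorder)
  define t where "t = max t0 0"
  have tT: "\<forall>l. l < M \<and> good l \<longrightarrow> T l t > d / 2" using t0 by (auto simp: t_def)
  define Z where "Z = {l. l < M \<and> (\<exists>j<N. x j t \<in> I l \<or> s j \<in> I l \<or> - s j \<in> I l)}"
  have one: "card {l. l < M \<and> p \<in> I l} \<le> 1" for p
  proof -
    have "card {l. l < M \<and> p \<in> I l} \<le> Suc 0"
      by (subst card_le_Suc0_iff_eq) (use Idisj in auto)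
    then show ?thesis by simp
  qed
  have "Z \<subseteq> (\<Union>j\<in>{..<N}. {l. l < M \<and> x j t \<in> I l} \<union> {l. l < M \<and> s j \<in> I l} \<union> {l. l < M \<and> - s j \<in> I l})"
    unfolding Z_def by auto
  then have "card Z \<le> card (\<Union>j\<in>{..<N}. {l. l < M \<and> x j t \<in> I l} \<union> {l. l < M \<and> s j \<in> I l} \<union> {l. l < M \<and> - s j \<in> I l})"
    by (intro card_mono) auto
  also have "\<dots> \<le> (\<Sum>j<N. card ({l. l < M \<and> x j t \<in> I l} \<union> {l. l < M \<and> s j \<in> I l} \<union> {l. l < M \<and> - s j \<in> I l}))"
    by (rule card_UN_le) simp
  also have "\<dots> \<le> (\<Sum>j<N. 3)"
  proof (rule sum_mono)
    fix j
    have "card ({l. l < M \<and> x j t \<in> I l} \<union> {l. l < M \<and> s j \<in> I l} \<union> {l. l < M \<and> - s j \<in> I l})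
      \<le> card ({l. l < M \<and> x j t \<in> I l} \<union> {l. l < M \<and> s j \<in> I l}) + card {l. l < M \<and> - s j \<in> I l}"
      by (rule card_Un_le)
    also have "\<dots> \<le> card {l. l < M \<and> x j t \<in> I l} + card {l. l < M \<and> s j \<in> I l} + card {l. l < M \<and> - s j \<in> I l}"
      using card_Un_le by simp
    also have "\<dots> \<le> 3" using one[of "x j t"] one[of "s j"] one[of "- s j"] by simp
    finally show "card ({l. l < M \<and> x j t \<in> I l} \<union> {l. l < M \<and> s j \<in> I l} \<union> {l. l < M \<and> - s j \<in> I l}) \<le> 3" .
  qed
  also have "\<dots> = 3 * N" by simp
  finally have cZ: "card Z < M" by (simp add: M_def)
  have "\<exists>l. l < M \<and> l \<notin> Z"
  proof (rule ccontr)
    assume "\<not> ?thesis"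
    then have "{..<M} \<subseteq> Z" by auto
    then have "card {..<M} \<le> card Z" by (intro card_mono) (auto simp: Z_def)
    then show False using cZ by simp
  qed
  then obtain l where l: "l < M" "l \<notin> Z" by blast
  have g: "good l" using l unfolding Z_def good_def by auto
  have "T l t = 0" unfolding T_def
  proof (rule sum.neutral, intro ballI)
    fix j assume j: "j \<in> {..<N}"
    have "x j t \<notin> I l" using l j unfolding Z_def by auto
    then have "x j t \<le> c l - d \<or> c l + d \<le> x j t" by (auto simp: I_def)
    then show "(if - s j < c l - d \<and> c l + d < s j then tent (c l) d (x j t) else 0) = 0"
      using tent_out[OF d0] by simp
  qed
  then show False using tT l(1) g d0 by fastforce
qed

end


lemma sys_neg:
  assumes "sys N s \<alpha> x amax"
  shows "sys N s \<alpha> (\<lambda>i t. - x i t) amax"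
proof -
  interpret sys N s \<alpha> x amax by (rule assms)
  have rhs: "sat_rhs N s \<alpha> (\<lambda>i t. - x i t) i = (\<lambda>\<tau>. (-1) * sat_rhs N s \<alpha> x i \<tau>)" if i: "i < N" for i
  proof
    fix \<tau>
    have "sat_rhs N s \<alpha> (\<lambda>i t. - x i t) i \<tau> = (\<Sum>j<N. - (\<alpha> i j \<tau> * (sat (s j) (x j \<tau>) - sat (s i) (x i \<tau>))))"
      unfolding sat_rhs_def
      by (rule sum.cong[OF refl]) (use s_pos i in \<open>auto simp: sat_neg algebra_simps\<close>)
    also have "\<dots> = (-1) * sat_rhs N s \<alpha> x i \<tau>" by (simp add: sat_rhs_def sum_negf)
    finally show "sat_rhs N s \<alpha> (\<lambda>i t. - x i t) i \<tau> = (-1) * sat_rhs N s \<alpha> x i \<tau>" .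
  qed
  have "caratheodory_solution N s \<alpha> (\<lambda>i t. - x i t)"
    unfolding caratheodory_solution_def
  proof (intro allI impI conjI)
    fix i t assume i: "i < N" and t: "(0::real) \<le> t"
    have I: "set_integrable lebesgue {0..t} (sat_rhs N s \<alpha> x i)"
      and e: "x i t = x i 0 + (LINT \<tau>:{0..t}|lebesgue. sat_rhs N s \<alpha> x i \<tau>)"
      using sol i t unfolding caratheodory_solution_def by blast+
    show "set_integrable lebesgue {0..t} (sat_rhs N s \<alpha> (\<lambda>i t. - x i t) i)"
      unfolding rhs[OF i] using I by (rule set_integrable_mult_right)
    have "(LINT \<tau>:{0..t}|lebesgue. (-1) * sat_rhs N s \<alpha> x i \<tau>) = (-1) * (LINT \<tau>:{0..t}|lebesgue. sat_rhs N s \<alpha> x i \<tau>)"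
      by (rule set_integral_mult_right)
    then show "- x i t = - x i 0 + (LINT \<tau>:{0..t}|lebesgue. sat_rhs N s \<alpha> (\<lambda>i t. - x i t) i \<tau>)"
      unfolding rhs[OF i] using e by simp
  qed
  then show ?thesis by (rule sys.intro[OF s_pos s_inj a_sym a_bnd])
qed

lemma (in sys) x_conv:
  assumes k: "k < N"
  shows "\<exists>L. (x k \<longlongrightarrow> L) at_top"
proof (rule ccontr)
  assume nc: "\<not> ?thesis"
  obtain Bx where Bx: "\<forall>i<N. \<forall>t\<ge>0. \<bar>x i t\<bar> \<le> Bx" using x_bounded by blast
  obtain a b where ab: "a < b" and fa: "\<forall>T. \<exists>t\<ge>T. x k t < a" and fb: "\<forall>T. \<exists>t\<ge>T. x k t > b"
    using osc[of "x k" Bx] Bx k nc by blast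
  interpret neg: sys N s \<alpha> "\<lambda>i t. - x i t" amax by (rule sys_neg) (rule sys_axioms)
  consider "s k < b" | "a < - s k" | "b \<le> s k" "- s k \<le> a" by linarith
  then show False
  proof cases
    case 1 show False using caseA[OF k ab 1 fa fb] .
  next
    case 2
    show False
    proof (rule neg.caseA[OF k, of "-b" "-a"])
      show "- b < - a" "s k < - a" using ab 2 by auto
      show "\<forall>T. \<exists>t\<ge>T. - x k t < - b" using fb by auto
      show "\<forall>T. \<exists>t\<ge>T. - x k t > - a" using fa by auto
    qed
  next
    case 3 then show False using interior_False[OF k ab 3(2) 3(1) fa fb] by simp
  qed
qed


lemma (in sys) finite_int:
  assumes X: "\<forall>k<N. (x k \<longlongrightarrow> X k) at_top" and p: "p < N" and q: "q < N"
    and Ypq: "sat (s q) (X q) < sat (s p) (X p)"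
  shows "(\<integral>\<^sup>+ t\<in>{0..}. ennreal (\<alpha> p q t) \<partial>lebesgue) < \<infinity>"
proof -
  define Y where "Y k = sat (s k) (X k)" for k
  define y where "y k t = sat (s k) (x k t)" for k t
  define cc where "cc = (Y p + Y q) / 2"
  define \<delta> where "\<delta> = (Y p - Y q) / 2"
  define U where "U = {k. k < N \<and> cc < Y k}"
  have \<delta>0: "\<delta> > 0" using Ypq by (simp add: \<delta>_def Y_def)
  have pU: "p \<in> U" using p Ypq by (simp add: U_def cc_def Y_def)
  have qU: "q \<notin> U" using Ypq by (simp add: U_def cc_def Y_def)
  have Usub: "U \<subseteq> {..<N}" by (auto simp: U_def)
  have finU: "finite U" using Usub finite_subset by blast
  have yconv: "(y k \<longlongrightarrow> Y k) at_top" if k: "k < N" for k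
  proof -
    have "isCont (sat (s k)) (X k)"
      using sat_cont[of "s k"] s_pos k by (simp add: continuous_on_eq_continuous_at)
    moreover have "(x k \<longlongrightarrow> X k) at_top" using X k by auto
    ultimately have "((\<lambda>t. sat (s k) (x k t)) \<longlongrightarrow> sat (s k) (X k)) at_top"
      by (rule isCont_tendsto_compose)
    then show ?thesis unfolding y_def Y_def .
  qed
  have ev1: "eventually (\<lambda>t. \<forall>k\<in>U. \<forall>l\<in>{..<N} - U. y l t < y k t) at_top"
  proof (rule eventually_ball_finite[OF finU], rule ballI)
    fix k assume k: "k \<in> U"
    show "eventually (\<lambda>t. \<forall>l\<in>{..<N} - U. y l t < y k t) at_top"
    proof (rule eventually_ball_finite, simp, rule ballI)
      fix l assume l: "l \<in> {..<N} - U"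
      have "Y l < Y k" using k l by (auto simp: U_def)
      have "((\<lambda>t. y k t - y l t) \<longlongrightarrow> Y k - Y l) at_top"
        using yconv k l U_def by (intro tendsto_diff) auto
      then have "eventually (\<lambda>t. 0 < y k t - y l t) at_top"
        using \<open>Y l < Y k\<close> by (intro order_tendstoD(1)) auto
      then show "eventually (\<lambda>t. y l t < y k t) at_top" by eventually_elim simp
    qed
  qed
  have ev2: "eventually (\<lambda>t. \<delta> < y p t - y q t) at_top"
  proof -
    have "((\<lambda>t. y p t - y q t) \<longlongrightarrow> Y p - Y q) at_top"
      using yconv p q by (intro tendsto_diff) auto
    moreover have "\<delta> < Y p - Y q" using \<delta>0 by (simp add: \<delta>_def)
    ultimately show ?thesis by (rule order_tendstoD(1))
  qed
  obtain T0 where T0: "\<forall>t\<ge>T0. (\<forall>k\<in>U. \<forall>l\<in>{..<N} - U. y l t < y k t) \<and> \<delta> < y p t - y q t"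
    using eventually_conj[OF ev1 ev2] by (auto simp: eventually_at_top_linorder)
  define T where "T = max T0 0"
  have T0le: "T \<ge> 0" "T0 \<le> T" by (auto simp: T_def)
  have Tprop: "(\<forall>k\<in>U. \<forall>l\<in>{..<N} - U. y l t < y k t) \<and> \<delta> < y p t - y q t" if "t \<ge> T" for t
    using T0 T0le that by auto
  define \<phi> where "\<phi> \<tau> = - (\<Sum>k\<in>U. g k \<tau>)" for \<tau>
  have \<phi>exp: "\<phi> \<tau> = (\<Sum>k\<in>U. \<Sum>l<N. \<alpha> k l \<tau> * (y k \<tau> - y l \<tau>))" for \<tau>
  proof -
    have "\<phi> \<tau> = (\<Sum>k\<in>U. - (\<Sum>l<N. \<alpha> k l \<tau> * (sat (s l) (x l \<tau>) - sat (s k) (x k \<tau>))))"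
      unfolding \<phi>_def g_def sat_rhs_def by (simp add: sum_negf)
    also have "\<dots> = (\<Sum>k\<in>U. \<Sum>l<N. - (\<alpha> k l \<tau> * (sat (s l) (x l \<tau>) - sat (s k) (x k \<tau>))))"
      by (simp add: sum_negf)
    also have "\<dots> = (\<Sum>k\<in>U. \<Sum>l<N. \<alpha> k l \<tau> * (y k \<tau> - y l \<tau>))"
      by (intro sum.cong refl) (simp add: y_def algebra_simps)
    finally show ?thesis .
  qed
  have \<phi>low: "\<delta> * \<alpha> p q \<tau> \<le> \<phi> \<tau>" if \<tau>T: "\<tau> \<ge> T" for \<tau>
  proof -
    define f where "f k l = \<alpha> k l \<tau> * (y k \<tau> - y l \<tau>)" for k l
    have \<tau>0: "\<tau> \<ge> 0" using \<tau>T T0le by linarith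
    have spl: "(\<Sum>l<N. f k l) = (\<Sum>l\<in>{..<N}-U. f k l) + (\<Sum>l\<in>U. f k l)" for k
      using sum.subset_diff[OF Usub, of "f k"] by simp
    have split: "(\<Sum>k\<in>U. \<Sum>l<N. f k l) = (\<Sum>k\<in>U. \<Sum>l\<in>U. f k l) + (\<Sum>k\<in>U. \<Sum>l\<in>{..<N}-U. f k l)"
      unfolding spl by (simp add: sum.distrib add.commute)
    have "(\<Sum>k\<in>U. \<Sum>l\<in>U. f k l) = (\<Sum>l\<in>U. \<Sum>k\<in>U. f k l)" by (rule sum.swap)
    also have "\<dots> = (\<Sum>k\<in>U. \<Sum>l\<in>U. - f k l)"
    proof (intro sum.cong refl)
      fix k l assume "k \<in> U" "l \<in> U"
      then have "k < N" "l < N" using Usub by auto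
      then have "\<alpha> l k \<tau> = \<alpha> k l \<tau>" using a_sym \<tau>0 by auto
      then show "f l k = - f k l" by (simp add: f_def algebra_simps)
    qed
    also have "\<dots> = - (\<Sum>k\<in>U. \<Sum>l\<in>U. f k l)" by (simp add: sum_negf)
    finally have inner0: "(\<Sum>k\<in>U. \<Sum>l\<in>U. f k l) = 0" by simp
    have fnn: "0 \<le> f k l" if "k \<in> U" "l \<in> {..<N} - U" for k l
    proof -
      have "k < N" "l < N" using that Usub by auto
      then have "0 \<le> \<alpha> k l \<tau>" using a_bnd \<tau>0 by auto
      moreover have "y l \<tau> < y k \<tau>" using Tprop[OF \<tau>T] that by auto
      ultimately show ?thesis by (simp add: f_def)
    qed
    have q': "q \<in> {..<N} - U" using q qU by auto
    have "\<delta> * \<alpha> p q \<tau> \<le> f p q"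
    proof -
      have "0 \<le> \<alpha> p q \<tau>" using a_bnd \<tau>0 p q by auto
      moreover have "\<delta> \<le> y p \<tau> - y q \<tau>" using Tprop[OF \<tau>T] by auto
      ultimately have "\<alpha> p q \<tau> * \<delta> \<le> \<alpha> p q \<tau> * (y p \<tau> - y q \<tau>)" by (rule mult_left_mono[rotated])
      then show ?thesis by (simp add: f_def mult.commute)
    qed
    also have "\<dots> \<le> (\<Sum>l\<in>{..<N}-U. f p l)"
      by (rule member_le_sum[OF q']) (use fnn pU in auto)
    also have "\<dots> \<le> (\<Sum>k\<in>U. \<Sum>l\<in>{..<N}-U. f k l)"
      by (rule member_le_sum[OF pU, of "\<lambda>k. \<Sum>l\<in>{..<N}-U. f k l"]) (use fnn finU in \<open>auto intro: sum_nonneg\<close>)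
    also have "\<dots> = \<phi> \<tau>" unfolding \<phi>exp f_def[symmetric] split inner0 by simp
    finally show ?thesis .
  qed
  have \<phi>nn: "0 \<le> \<phi> \<tau>" if "\<tau> \<ge> T" for \<tau>
  proof -
    have "0 \<le> \<alpha> p q \<tau>" using a_bnd that T0le p q by auto
    then have "0 \<le> \<delta> * \<alpha> p q \<tau>" using \<delta>0 by simp
    then show ?thesis using \<phi>low[OF that] by linarith
  qed
  obtain Bx where Bx: "Bx \<ge> 0" "\<forall>i<N. \<forall>t\<ge>0. \<bar>x i t\<bar> \<le> Bx" using x_bounded by blast
  define R where "R = 2 * real N * Bx"
  have \<phi>int: "integral {T..t} \<phi> \<le> R" if Tt: "T \<le> t" for t
  proof -
    have gi: "g k integrable_on {T..t}" "x k t - x k T = integral {T..t} (g k)" if "k \<in> U" for k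
      using xdiff[of k T t] that Usub T0le Tt by auto
    have "integral {T..t} \<phi> = - (\<Sum>k\<in>U. integral {T..t} (g k))"
      unfolding \<phi>_def using gi by (simp add: integral_sum[OF finU])
    also have "\<dots> = (\<Sum>k\<in>U. x k T - x k t)"
      by (simp add: sum_negf[symmetric]) (intro sum.cong refl, use gi in \<open>simp add: algebra_simps\<close>)
    also have "\<dots> \<le> (\<Sum>k\<in>U. 2 * Bx)"
    proof (rule sum_mono)
      fix k assume "k \<in> U"
      then have "k < N" using Usub by auto
      then have "\<bar>x k T\<bar> \<le> Bx" "\<bar>x k t\<bar> \<le> Bx" using Bx T0le Tt by auto
      then show "x k T - x k t \<le> 2 * Bx" by linarith
    qed
    also have "\<dots> = real (card U) * (2 * Bx)" by simp
    also have "\<dots> \<le> real N * (2 * Bx)"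
    proof -
      have "card U \<le> card {..<N}" using Usub by (intro card_mono) auto
      then show ?thesis using Bx(1) by (intro mult_right_mono) auto
    qed
    finally show ?thesis by (simp add: R_def)
  qed
  have \<phi>set: "set_integrable lebesgue {T..t} \<phi>" if Tt: "T \<le> t" for t
  proof -
    have t0: "0 \<le> t" using Tt T0le by linarith
    have "set_integrable lebesgue {T..t} (g k)" if "k \<in> U" for k
    proof (rule set_integrable_subset)
      show "set_integrable lebesgue {0..t} (g k)" using sol_at[of k t] that Usub t0 by auto
      show "{T..t} \<in> sets lebesgue" by simp
      show "{T..t} \<subseteq> {0..t}" using T0le by auto
    qed
    then have "integrable lebesgue (\<lambda>\<tau>. \<Sum>k\<in>U. indicator {T..t} \<tau> *\<^sub>R g k \<tau>)"
      unfolding set_integrable_def by (intro Bochner_Integration.integrable_sum) auto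
    then have "integrable lebesgue (\<lambda>\<tau>. - (\<Sum>k\<in>U. indicator {T..t} \<tau> *\<^sub>R g k \<tau>))"
      by (rule integrable_minus)
    then show ?thesis unfolding set_integrable_def \<phi>_def by (simp add: scaleR_sum_right sum_distrib_left)
  qed
  define F where "F n \<tau> = ennreal (indicator {T..T + real n} \<tau> *\<^sub>R (\<phi> \<tau> / \<delta>))" for n :: nat and \<tau>
  have Fset: "set_integrable lebesgue {T..T + real n} (\<lambda>\<tau>. \<phi> \<tau> / \<delta>)" for n
    using \<phi>set[of "T + real n"] by (intro set_integrable_divide) auto
  have Fmeas: "F n \<in> borel_measurable lebesgue" for n
  proof -
    have "(\<lambda>\<tau>. indicator {T..T + real n} \<tau> *\<^sub>R (\<phi> \<tau> / \<delta>)) \<in> borel_measurable lebesgue"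
      using Fset[of n] unfolding set_integrable_def by (rule borel_measurable_integrable)
    then show ?thesis unfolding F_def[abs_def] by (rule measurable_compose[OF _ measurable_ennreal])
  qed
  have hnn: "0 \<le> indicator {T..T + real n} \<tau> *\<^sub>R (\<phi> \<tau> / \<delta>)" for n \<tau>
    using \<phi>nn \<delta>0 by (auto simp: indicator_def)
  have Fint: "integral\<^sup>N lebesgue (F n) \<le> ennreal (R / \<delta>)" for n
  proof -
    have "integral\<^sup>N lebesgue (F n) = ennreal (integral\<^sup>L lebesgue (\<lambda>\<tau>. indicator {T..T + real n} \<tau> *\<^sub>R (\<phi> \<tau> / \<delta>)))"
      unfolding F_def[abs_def]
      by (rule nn_integral_eq_integral) (use Fset[of n] hnn in \<open>auto simp: set_integrable_def\<close>)
    also have "integral\<^sup>L lebesgue (\<lambda>\<tau>. indicator {T..T + real n} \<tau> *\<^sub>R (\<phi> \<tau> / \<delta>))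
        = (LINT \<tau>:{T..T + real n}|lebesgue. \<phi> \<tau> / \<delta>)"
      by (simp add: set_lebesgue_integral_def)
    also have "\<dots> = integral {T..T + real n} (\<lambda>\<tau>. \<phi> \<tau> / \<delta>)"
      by (rule set_lebesgue_integral_eq_integral(2)[OF Fset])
    also have "\<dots> = integral {T..T + real n} \<phi> / \<delta>" by simp
    also have "\<dots> \<le> R / \<delta>" using \<phi>int[of "T + real n"] \<delta>0 by (simp add: divide_right_mono)
    finally show ?thesis by (simp add: ennreal_leI)
  qed
  have Finc: "incseq F"
  proof (rule incseq_SucI, rule le_funI)
    fix n \<tau>
    show "F n \<tau> \<le> F (Suc n) \<tau>"
    proof (cases "\<tau> \<in> {T..T + real n}")
      case True
      then have "\<tau> \<in> {T..T + real (Suc n)}" by auto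
      then show ?thesis using True by (simp add: F_def)
    next
      case False
      then show ?thesis by (simp add: F_def)
    qed
  qed
  have Fsup: "(SUP n. F n \<tau>) = ennreal (indicator {T..} \<tau> * (\<phi> \<tau> / \<delta>))" for \<tau>
  proof (cases "T \<le> \<tau>")
    case False
    then show ?thesis by (simp add: F_def)
  next
    case True
    obtain n :: nat where n: "\<tau> - T \<le> real n" using real_arch_simple by blast
    have le: "F m \<tau> \<le> ennreal (\<phi> \<tau> / \<delta>)" for m
      using True \<phi>nn[OF True] \<delta>0 by (auto simp: F_def indicator_def)
    have eq: "F n \<tau> = ennreal (\<phi> \<tau> / \<delta>)" using True n by (simp add: F_def)
    have "(SUP n. F n \<tau>) = ennreal (\<phi> \<tau> / \<delta>)"
    proof (rule antisym)
      show "(SUP n. F n \<tau>) \<le> ennreal (\<phi> \<tau> / \<delta>)" by (rule SUP_least) (rule le)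
      show "ennreal (\<phi> \<tau> / \<delta>) \<le> (SUP n. F n \<tau>)" unfolding eq[symmetric] by (rule SUP_upper) simp
    qed
    then show ?thesis using True by simp
  qed
  have Smeas: "(\<lambda>\<tau>. SUP n. F n \<tau>) \<in> borel_measurable lebesgue"
    by (rule borel_measurable_SUP) (auto intro: Fmeas)
  have Isup: "(\<integral>\<^sup>+\<tau>. (SUP n. F n \<tau>) \<partial>lebesgue) \<le> ennreal (R / \<delta>)"
    unfolding nn_integral_monotone_convergence_SUP[OF Finc Fmeas]
    by (rule SUP_least) (rule Fint)
  have Ifm: "{0..T} \<in> fmeasurable lebesgue" using lmeasurable_cbox[of 0 T] by simp
  have Imeas: "(\<lambda>\<tau>. ennreal amax * indicator {0..T} \<tau>) \<in> borel_measurable lebesgue"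
    using fmeasurableD[OF Ifm] by (intro borel_measurable_times_ennreal borel_measurable_const borel_measurable_indicator)
  have point: "ennreal (\<alpha> p q \<tau>) * indicator {0..} \<tau> \<le> ennreal amax * indicator {0..T} \<tau> + (SUP n. F n \<tau>)" for \<tau>
  proof (cases "\<tau> < 0")
    case True then show ?thesis by simp
  next
    case False
    show ?thesis
    proof (cases "\<tau> \<le> T")
      case True
      have "\<alpha> p q \<tau> \<le> amax" using a_bnd p q False by auto
      then have "ennreal (\<alpha> p q \<tau>) \<le> ennreal amax" by (rule ennreal_leI)
      then have "ennreal (\<alpha> p q \<tau>) \<le> ennreal amax + (SUP n. F n \<tau>)" by (rule add_increasing2[rotated]) simp
      then show ?thesis using True False by simp
    next
      case TF: False
      have "\<delta> * \<alpha> p q \<tau> \<le> \<phi> \<tau>" using \<phi>low TF by simp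
      then have "\<alpha> p q \<tau> \<le> \<phi> \<tau> / \<delta>" using \<delta>0 by (simp add: le_divide_eq mult.commute)
      then have "ennreal (\<alpha> p q \<tau>) \<le> ennreal (\<phi> \<tau> / \<delta>)" by (rule ennreal_leI)
      also have "\<dots> = (SUP n. F n \<tau>)" using Fsup[of \<tau>] TF by simp
      finally have "ennreal (\<alpha> p q \<tau>) \<le> 0 + (SUP n. F n \<tau>)" by simp
      then show ?thesis using TF False by simp
    qed
  qed
  have "(\<integral>\<^sup>+ t\<in>{0..}. ennreal (\<alpha> p q t) \<partial>lebesgue)
      \<le> (\<integral>\<^sup>+\<tau>. ennreal amax * indicator {0..T} \<tau> + (SUP n. F n \<tau>) \<partial>lebesgue)"
    by (rule nn_integral_mono) (rule point)
  also have "\<dots> = (\<integral>\<^sup>+\<tau>. ennreal amax * indicator {0..T} \<tau> \<partial>lebesgue) + (\<integral>\<^sup>+\<tau>. (SUP n. F n \<tau>) \<partial>lebesgue)"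
    by (rule nn_integral_add[OF Imeas Smeas])
  also have "(\<integral>\<^sup>+\<tau>. ennreal amax * indicator {0..T} \<tau> \<partial>lebesgue) = ennreal amax * emeasure lebesgue {0..T}"
    using Ifm by (intro nn_integral_cmult_indicator) (auto dest: fmeasurableD)
  finally have le: "(\<integral>\<^sup>+ t\<in>{0..}. ennreal (\<alpha> p q t) \<partial>lebesgue)
      \<le> ennreal amax * emeasure lebesgue {0..T} + (\<integral>\<^sup>+\<tau>. (SUP n. F n \<tau>) \<partial>lebesgue)" .
  have "emeasure lebesgue {0..T} < \<infinity>" using fmeasurableD2[OF Ifm] by (simp add: top.not_eq_extremum)
  then have A: "ennreal amax * emeasure lebesgue {0..T} < \<infinity>" by (simp add: ennreal_mult_less_top)
  have B: "(\<integral>\<^sup>+\<tau>. (SUP n. F n \<tau>) \<partial>lebesgue) < \<infinity>" using Isup by (rule le_less_trans) simp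
  have "ennreal amax * emeasure lebesgue {0..T} + (\<integral>\<^sup>+\<tau>. (SUP n. F n \<tau>) \<partial>lebesgue) < \<infinity>"
    using A B by (simp add: top.not_eq_extremum)
  with le show ?thesis by (rule le_less_trans)
qed

theorem lemma8:
  fixes N :: nat and s :: "nat \<Rightarrow> real" and \<alpha> :: "nat \<Rightarrow> nat \<Rightarrow> real \<Rightarrow> real"
    and x :: "nat \<Rightarrow> real \<Rightarrow> real" and \<alpha>min \<alpha>max :: real
  assumes s_pos: "\<forall>i<N. s i > 0"
    and s_dec: "\<forall>i j. i < j \<and> j < N \<longrightarrow> s i > s j"
    and weights: "standing_weights N \<alpha>"
    and conn: "integrally_connected N \<alpha>"
    and amin: "0 < \<alpha>min" and amax: "\<alpha>min \<le> \<alpha>max"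
    and range: "\<forall>i<N. \<forall>j<N. \<forall>t\<ge>0. \<alpha> i j t = 0 \<or> (\<alpha>min \<le> \<alpha> i j t \<and> \<alpha> i j t \<le> \<alpha>max)"
    and sol: "caratheodory_solution N s \<alpha> x"
  shows "\<forall>i<N. \<exists>xs. (x i \<longlongrightarrow> xs) at_top \<and>
            (i < N - 1 \<longrightarrow> xs \<in> {- s (N - 1) .. s (N - 1)})"
proof -
  have s_inj: "\<forall>i<N. \<forall>j<N. s i = s j \<longrightarrow> i = j"
  proof (intro allI impI)
    fix i j assume ij: "i < N" "j < N" "s i = s j"
    show "i = j"
    proof (rule ccontr)
      assume "i \<noteq> j"
      then consider "i < j" | "j < i" by linarith
      then show False
      proof cases
        case 1 then have "s i > s j" using s_dec ij by blast
        then show False using ij by simp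
      next
        case 2 then have "s j > s i" using s_dec ij by blast
        then show False using ij by simp
      qed
    qed
  qed
  have a_sym: "\<forall>i<N. \<forall>j<N. \<forall>t\<ge>0. \<alpha> i j t = \<alpha> j i t"
    using weights unfolding standing_weights_def by blast
  have a_bnd: "\<forall>i<N. \<forall>j<N. \<forall>t\<ge>0. 0 \<le> \<alpha> i j t \<and> \<alpha> i j t \<le> \<alpha>max"
  proof (intro allI impI)
    fix i j :: nat and t :: real assume "i < N" "j < N" "0 \<le> t"
    then have "\<alpha> i j t = 0 \<or> (\<alpha>min \<le> \<alpha> i j t \<and> \<alpha> i j t \<le> \<alpha>max)" using range by blast
    then show "0 \<le> \<alpha> i j t \<and> \<alpha> i j t \<le> \<alpha>max" using amin amax by auto
  qed
  interpret sys N s \<alpha> x \<alpha>max by (rule sys.intro[OF s_pos s_inj a_sym a_bnd sol])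
  define X where "X k = (SOME L. (x k \<longlongrightarrow> L) at_top)" for k
  have X: "\<forall>k<N. (x k \<longlongrightarrow> X k) at_top"
  proof (intro allI impI)
    fix k assume "k < N"
    then have "\<exists>L. (x k \<longlongrightarrow> L) at_top" by (rule x_conv)
    then show "(x k \<longlongrightarrow> X k) at_top" unfolding X_def by (rule someI_ex)
  qed
  define Y where "Y k = sat (s k) (X k)" for k
  have edge: "Y a = Y b" if ab: "a < N" "b < N" "integral_edge \<alpha> a b" for a b
  proof (rule ccontr)
    assume ne: "Y a \<noteq> Y b"
    have inf: "(\<integral>\<^sup>+ t\<in>{0..}. ennreal (\<alpha> a b t) \<partial>lebesgue) = \<infinity>"
      using ab(3) by (simp add: integral_edge_def)
    consider "Y b < Y a" | "Y a < Y b" using ne by linarith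
    then show False
    proof cases
      case 1
      then have "(\<integral>\<^sup>+ t\<in>{0..}. ennreal (\<alpha> a b t) \<partial>lebesgue) < \<infinity>"
        using finite_int[OF X ab(1,2)] by (simp add: Y_def)
      then show False using inf by simp
    next
      case 2
      then have fin: "(\<integral>\<^sup>+ t\<in>{0..}. ennreal (\<alpha> b a t) \<partial>lebesgue) < \<infinity>"
        using finite_int[OF X ab(2,1)] by (simp add: Y_def)
      have "(\<integral>\<^sup>+ t\<in>{0..}. ennreal (\<alpha> b a t) \<partial>lebesgue) = (\<integral>\<^sup>+ t\<in>{0..}. ennreal (\<alpha> a b t) \<partial>lebesgue)"
      proof (rule nn_integral_cong)
        fix t :: real
        show "ennreal (\<alpha> b a t) * indicator {0..} t = ennreal (\<alpha> a b t) * indicator {0..} t"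
          using a_sym ab by (cases "0 \<le> t") auto
      qed
      then show False using fin inf by simp
    qed
  qed
  have conn': "Y i = Y j" if ij: "i < N" "j < N" for i j
  proof -
    have "(\<lambda>a b. a < N \<and> b < N \<and> integral_edge \<alpha> a b)\<^sup>*\<^sup>* i j"
      using conn ij unfolding integrally_connected_def by blast
    then show ?thesis
    proof (induction rule: rtranclp_induct)
      case base then show ?case by simp
    next
      case (step b c) then show ?case using edge by auto
    qed
  qed
  show ?thesis
  proof (intro allI impI)
    fix i assume i: "i < N"
    show "\<exists>xs. (x i \<longlongrightarrow> xs) at_top \<and> (i < N - 1 \<longrightarrow> xs \<in> {- s (N - 1)..s (N - 1)})"
    proof (intro exI conjI impI)
      show "(x i \<longlongrightarrow> X i) at_top" using X i by auto
      assume i1: "i < N - 1"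
      have m: "N - 1 < N" using i by simp
      have sm: "s (N - 1) > 0" using s_pos m by auto
      have si: "s i > s (N - 1)" using s_dec i1 m by auto
      have "Y i = Y (N - 1)" by (rule conn'[OF i m])
      moreover have "\<bar>Y (N - 1)\<bar> \<le> s (N - 1)" unfolding Y_def by (rule sat_bound[OF sm])
      ultimately have "\<bar>sat (s i) (X i)\<bar> \<le> s (N - 1)" by (simp add: Y_def)
      moreover have "sat (s i) (X i) = max (- s i) (min (X i) (s i))"
        using sat_clamp[of "s i" "X i"] si sm by linarith
      ultimately have h: "\<bar>max (- s i) (min (X i) (s i))\<bar> \<le> s (N - 1)" by simp
      show "X i \<in> {- s (N - 1)..s (N - 1)}"
      proof (rule ccontr)
        assume "X i \<notin> {- s (N - 1)..s (N - 1)}"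
        then consider "X i < - s (N - 1)" | "X i > s (N - 1)" by fastforce
        then show False
        proof cases
          case 1
          then have e: "min (X i) (s i) = X i" using sm si by simp
          have l: "max (- s i) (X i) < - s (N - 1)" using 1 si by simp
          have "- s (N - 1) \<le> max (- s i) (min (X i) (s i))" using h by (simp only: abs_le_iff) linarith
          then show False using l unfolding e by linarith
        next
          case 2
          then have "min (X i) (s i) > s (N - 1)" using si by simp
          then have "max (- s i) (min (X i) (s i)) > s (N - 1)" by (simp add: less_max_iff_disj)
          then show False using h by simp
        qed
      qed
    qed
  qed
qed

end
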